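(* $\Pi_2\text{-}\mathrm{CSP}(\mathbb{N};\leq) \subseteq \Pi_2\text{-}\mathrm{CSP}(\mathbb{Q};\leq)$.
   Context: Structures over a signature with one binary relation symbol, interpreted as the usual order $\leq$ on $\mathbb{N}$ and $\mathbb{Q}$ respectively. $\Pi_2\text{-}\mathrm{CSP}(\mathcal{A})$ is the set of sentences of the form $\forall\bar x\exists\bar y\,P$, with $P$ a conjunction of atoms (relational atoms and equalities), true in $\mathcal{A}$. *)

theory Defs
  imports Complex_Main
begin

text \<open>Variables of a Pi_2 sentence: Inl i is the universally quantified x_i,
  Inr j is the existentially quantified y_j.\<close>
type_synonym var = "nat + nat"

datatype atom = Rel var var | Equal var var

text \<open>A Pi_2 sentence  forall x. exists y. P  where P is the conjunction of the
  listed atoms (finitely many variables occur).\<close>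
type_synonym pi2_sentence = "atom list"

fun val :: "(nat \<Rightarrow> 'a) \<Rightarrow> (nat \<Rightarrow> 'a) \<Rightarrow> var \<Rightarrow> 'a" where
  "val xs ys (Inl i) = xs i"
| "val xs ys (Inr j) = ys j"

fun atom_sat :: "('a \<Rightarrow> 'a \<Rightarrow> bool) \<Rightarrow> (nat \<Rightarrow> 'a) \<Rightarrow> (nat \<Rightarrow> 'a) \<Rightarrow> atom \<Rightarrow> bool" where
  "atom_sat R xs ys (Rel u v) = R (val xs ys u) (val xs ys v)"
| "atom_sat R xs ys (Equal u v) = (val xs ys u = val xs ys v)"

definition pi2_true :: "('a \<Rightarrow> 'a \<Rightarrow> bool) \<Rightarrow> pi2_sentence \<Rightarrow> bool" where
  "pi2_true R P \<longleftrightarrow> (\<forall>xs. \<exists>ys. \<forall>a \<in> set P. atom_sat R xs ys a)"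

definition Pi2_CSP :: "('a \<Rightarrow> 'a \<Rightarrow> bool) \<Rightarrow> pi2_sentence set" where
  "Pi2_CSP R = {P. pi2_true R P}"

end

theory Submission
  imports Defs
begin

fun avars :: "atom \<Rightarrow> var set" where
  "avars (Rel u v) = {u, v}"
| "avars (Equal u v) = {u, v}"

lemma finite_xvals:
  "finite {xs i |i. Inl i \<in> (\<Union>a\<in>set P. avars a)}"
proof -
  have fin: "finite (\<Union>a\<in>set P. avars a)"
    by (intro finite_UN_I) (auto, metis avars.elims finite.emptyI finite.insertI)
  have "{xs i |i. Inl i \<in> (\<Union>a\<in>set P. avars a)} \<subseteq> (\<lambda>u. case u of Inl i \<Rightarrow> xs i | Inr j \<Rightarrow> xs 0) ` (\<Union>a\<in>set P. avars a)"
    by force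
  thus ?thesis using fin finite_subset by blast
qed

theorem mainTheorem6:
  shows "Pi2_CSP ((\<le>) :: nat \<Rightarrow> nat \<Rightarrow> bool) \<subseteq> Pi2_CSP ((\<le>) :: rat \<Rightarrow> rat \<Rightarrow> bool)"
proof
  fix P assume "P \<in> Pi2_CSP ((\<le>) :: nat \<Rightarrow> nat \<Rightarrow> bool)"
  hence H: "\<And>xs. \<exists>ys. \<forall>a \<in> set P. atom_sat ((\<le>) :: nat \<Rightarrow> nat \<Rightarrow> bool) xs ys a"
    by (auto simp: Pi2_CSP_def pi2_true_def)
  show "P \<in> Pi2_CSP ((\<le>) :: rat \<Rightarrow> rat \<Rightarrow> bool)"
    unfolding Pi2_CSP_def pi2_true_def
  proof (intro CollectI allI)
    fix xs :: "nat \<Rightarrow> rat"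
    define W where "W = (\<Union>a\<in>set P. avars a)"
    define V where "V = {xs i |i. Inl i \<in> W}"
    have finV: "finite V" unfolding V_def W_def by (rule finite_xvals)
    define f :: "rat \<Rightarrow> nat" where "f v = card {w\<in>V. w < v}" for v
    have fmono: "f v < f w" if "v \<in> V" "v < w" for v w
      unfolding f_def
      by (rule psubset_card_mono) (use finV that in auto)
    have fle: "f v \<le> f w \<longleftrightarrow> v \<le> w" if "v \<in> V" "w \<in> V" for v w
      using fmono[of v w] fmono[of w v] that by (cases v w rule: linorder_cases) auto
    define g :: "nat \<Rightarrow> rat" where
      "g n = (if V = {} then 0 else Max ({v\<in>V. f v \<le> n} \<union> {Min V}))" for n
    have gmono: "g n \<le> g m" if "n \<le> m" for n m
    proof (cases "V = {}")
      case True thus ?thesis by (simp add: g_def)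
    next
      case False
      have "Max ({v\<in>V. f v \<le> n} \<union> {Min V}) \<le> Max ({v\<in>V. f v \<le> m} \<union> {Min V})"
        by (rule Max_mono) (use finV that in auto)
      thus ?thesis using False by (simp add: g_def)
    qed
    have gf: "g (f v) = v" if "v \<in> V" for v
    proof -
      have ne: "V \<noteq> {}" using that by auto
      have eq: "{w\<in>V. f w \<le> f v} \<union> {Min V} = {w\<in>V. w \<le> v}"
        using fle that finV ne by (auto intro: Min_le Min_in)
      have "Max {w\<in>V. w \<le> v} = v"
        by (rule Max_eqI) (use finV that in auto)
      thus ?thesis using ne eq by (simp add: g_def)
    qed
    obtain ys' where ys': "\<forall>a \<in> set P. atom_sat ((\<le>) :: nat \<Rightarrow> nat \<Rightarrow> bool) (f \<circ> xs) ys' a"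
      using H by blast
    have valeq: "val xs (g \<circ> ys') u = g (val (f \<circ> xs) ys' u)" if "u \<in> W" for u
    proof (cases u)
      case (Inl i)
      have "xs i \<in> V" using that Inl unfolding V_def by auto
      thus ?thesis using Inl gf by simp
    qed simp
    show "\<exists>ys. \<forall>a \<in> set P. atom_sat ((\<le>) :: rat \<Rightarrow> rat \<Rightarrow> bool) xs ys a"
    proof (intro exI ballI)
      fix a assume a: "a \<in> set P"
      have sub: "avars a \<subseteq> W" using a unfolding W_def by auto
      show "atom_sat (\<le>) xs (g \<circ> ys') a"
      proof (cases a)
        case (Rel u v)
        thus ?thesis using ys' a sub valeq[of u] valeq[of v] gmono by auto
      next
        case (Equal u v)
        thus ?thesis using ys' a sub valeq[of u] valeq[of v] by auto
      qed
    qed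
  qed
qed

end
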